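(* Let $f_\theta$ be a model. For every $f^*\in\mathcal F$, $O_{f_\theta}(f^* )=\operatorname{rank}_{f_\theta}(f^* )$.
   Context: A model is a map $f:\mathbb R^d\times\mathbb R^M\to\mathbb R$, $(x,\theta)\mapsto f(x;\theta)=f_\theta(x)$, differentiable in both $x$ and $\theta$; its function space is $\mathcal F=\{f_\theta:\theta\in\mathbb R^M\}$. The loss $\ell:\mathbb R\times\mathbb R\to[0,\infty)$ is continuously differentiable with $\ell(u,v)=0$ iff $u=v$. For $f^*\in\mathcal F$, the target set is $\mathcal M_{f^*}=\{\theta: f_\theta=f^*\}$. A dataset from $f^*$ of size $n$ is $S=\{(x_i,f^*(x_i))\}_{i=1}^n$; the empirical loss of $g:\mathbb R^d\to\mathbb R$ is $\frac1n\sum_{i=1}^n\ell(g(x_i),f^*(x_i))$ (identically $0$ if $n=0$). The tangent function hyperplane at $\theta'$ is $\widetilde{\mathcal T}_{\theta'}=\{f(\cdot;\theta')+a^\top\nabla_\theta f(\cdot;\theta'):a\in\mathbb R^M\}$. $f^*$ has LLR-guarantee at $\theta'\in\mathcal M_{f^*}$ from $S$ if the set of minimizers of the empirical loss over $\widetilde{\mathcal T}_{\theta'}$ is exactly $\{f^*\}$; $f^*$ has $n$-sample LLR-guarantee if there exist a dataset $S$ from $f^*$ of size $n$ and $\theta'\in\mathcal M_{f^*}$ such that $f^*$ has LLR-guarantee at $\theta'$ from $S$. The optimistic sample size $O_{f_\theta}(f^* )$ is the smallest $n\geq 0$ such that $f^*$ has $n$-sample LLR-guarantee. The model rank at $\theta$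 is $\operatorname{rank}_{f_\theta}(\theta)=\dim\operatorname{span}\{\partial_{\theta_i}f(\cdot;\theta)\}_{i=1}^M$, and the model rank of $f^*$ is $\operatorname{rank}_{f_\theta}(f^* )=\min_{\theta'\in\mathcal M_{f^*}}\operatorname{rank}_{f_\theta}(\theta')$. *)

theory Defs
  imports "HOL-Analysis.Analysis" "HOL-Library.Function_Algebras"
begin

text \<open>A model is f :: real^'d => real^'m => real, written f x theta.
  The index types 'd and 'm are finite, so x in R^d with d = CARD('d) and
  theta in R^M with M = CARD('m).\<close>

type_synonym ('d, 'm) model = "real^'d \<Rightarrow> real^'m \<Rightarrow> real"

definition is_model :: "('d::finite, 'm::finite) model \<Rightarrow> bool" where
  "is_model f \<longleftrightarrow>
     (\<forall>\<theta> x. (\<lambda>y. f y \<theta>) differentiable (at x)) \<and>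
     (\<forall>x \<theta>. (\<lambda>t. f x t) differentiable (at \<theta>))"

definition is_loss :: "(real \<Rightarrow> real \<Rightarrow> real) \<Rightarrow> bool" where
  "is_loss l \<longleftrightarrow>
     (\<forall>u v. 0 \<le> l u v) \<and>
     (\<forall>u v. l u v = 0 \<longleftrightarrow> u = v) \<and>
     (\<exists>D1 D2. continuous_on UNIV D1 \<and> continuous_on UNIV D2 \<and>
        (\<forall>p. ((\<lambda>q. l (fst q) (snd q)) has_derivative
               (\<lambda>h. D1 p * fst h + D2 p * snd h)) (at p)))"

definition fun_space :: "('d::finite, 'm::finite) model \<Rightarrow> (real^'d \<Rightarrow> real) set" where
  "fun_space f = {(\<lambda>x. f x \<theta>) | \<theta>. True}"

definition target_set :: "('d::finite, 'm::finite) model \<Rightarrow> (real^'d \<Rightarrow> real) \<Rightarrow> (real^'m) set" where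
  "target_set f fstar = {\<theta>. (\<lambda>x. f x \<theta>) = fstar}"

definition param_partial :: "('d::finite, 'm::finite) model \<Rightarrow> real^'m \<Rightarrow> 'm \<Rightarrow> (real^'d \<Rightarrow> real)" where
  "param_partial f \<theta> i = (\<lambda>x. frechet_derivative (\<lambda>t. f x t) (at \<theta>) (axis i 1))"

text \<open>Empirical loss of g on the dataset {(x_i, fstar x_i)}, i = 1..n, given by
  the list xs of inputs (n = length xs); identically 0 if n = 0.\<close>
definition emp_loss :: "(real \<Rightarrow> real \<Rightarrow> real) \<Rightarrow> (real^'d \<Rightarrow> real) \<Rightarrow> (real^'d) list
                        \<Rightarrow> (real^'d \<Rightarrow> real) \<Rightarrow> real" where
  "emp_loss l fstar xs g =
     (if xs = [] then 0 else (\<Sum>x\<leftarrow>xs. l (g x) (fstar x)) / real (length xs))"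

definition tangent_hyperplane :: "('d::finite, 'm::finite) model \<Rightarrow> real^'m \<Rightarrow> (real^'d \<Rightarrow> real) set" where
  "tangent_hyperplane f \<theta>' =
     {(\<lambda>x. f x \<theta>' + (\<Sum>i\<in>UNIV. a $ i * param_partial f \<theta>' i x)) | a. True}"

definition LLR_guarantee :: "('d::finite, 'm::finite) model \<Rightarrow> (real \<Rightarrow> real \<Rightarrow> real)
      \<Rightarrow> (real^'d \<Rightarrow> real) \<Rightarrow> real^'m \<Rightarrow> (real^'d) list \<Rightarrow> bool" where
  "LLR_guarantee f l fstar \<theta>' xs \<longleftrightarrow>
     {g \<in> tangent_hyperplane f \<theta>'. \<forall>h \<in> tangent_hyperplane f \<theta>'.
         emp_loss l fstar xs g \<le> emp_loss l fstar xs h} = {fstar}"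

definition n_sample_LLR :: "('d::finite, 'm::finite) model \<Rightarrow> (real \<Rightarrow> real \<Rightarrow> real)
      \<Rightarrow> (real^'d \<Rightarrow> real) \<Rightarrow> nat \<Rightarrow> bool" where
  "n_sample_LLR f l fstar n \<longleftrightarrow>
     (\<exists>xs \<theta>'. length xs = n \<and> \<theta>' \<in> target_set f fstar \<and> LLR_guarantee f l fstar \<theta>' xs)"

definition optimistic_sample_size :: "('d::finite, 'm::finite) model \<Rightarrow> (real \<Rightarrow> real \<Rightarrow> real)
      \<Rightarrow> (real^'d \<Rightarrow> real) \<Rightarrow> nat" where
  "optimistic_sample_size f l fstar = (LEAST n. n_sample_LLR f l fstar n)"

definition model_rank_at :: "('d::finite, 'm::finite) model \<Rightarrow> real^'m \<Rightarrow> nat" where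
  "model_rank_at f \<theta> =
     vector_space.dim (\<lambda>(c::real) (g::real^'d \<Rightarrow> real). (\<lambda>x. c * g x))
       (range (param_partial f \<theta>))"

definition model_rank :: "('d::finite, 'm::finite) model \<Rightarrow> (real^'d \<Rightarrow> real) \<Rightarrow> nat" where
  "model_rank f fstar = (LEAST r. \<exists>\<theta>' \<in> target_set f fstar. model_rank_at f \<theta>' = r)"

end

theory Submission
  imports Defs
begin

abbreviation fsc :: "real \<Rightarrow> ('a \<Rightarrow> real) \<Rightarrow> ('a \<Rightarrow> real)" where
  "fsc \<equiv> (\<lambda>c g x. c * g x)"

interpretation fv: vector_space "fsc"
  by unfold_locales (auto simp: fun_eq_iff algebra_simps)

lemma sum_fun_apply: "(sum g A) x = (\<Sum>a\<in>A. g a x)"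
  by (induction A rule: infinite_finite_induct) auto

definition inj_pts :: "('a \<Rightarrow> real) set \<Rightarrow> 'a list \<Rightarrow> bool" where
  "inj_pts S xs \<longleftrightarrow> (\<forall>v\<in>S. (\<forall>x\<in>set xs. v x = 0) \<longrightarrow> v = 0)"

lemma span_range_eq:
  fixes P :: "'m::finite \<Rightarrow> ('a \<Rightarrow> real)"
  shows "fv.span (range P) = {(\<lambda>x. \<Sum>i\<in>UNIV. a $ i * P i x) | a. True}"
proof
  show "fv.span (range P) \<subseteq> {(\<lambda>x. \<Sum>i\<in>UNIV. a $ i * P i x) | a. True}"
  proof (rule fv.span_minimal)
    show "range P \<subseteq> {(\<lambda>x. \<Sum>i\<in>UNIV. a $ i * P i x) | a. True}"
    proof safe
      fix j
      show "\<exists>a. P j = (\<lambda>x. \<Sum>i\<in>UNIV. a $ i * P i x) \<and> True"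
        proof (rule exI[of _ "axis j 1"], simp add: fun_eq_iff, intro allI)
          fix x
          have "(\<Sum>i\<in>UNIV. axis j 1 $ i * P i x) = (\<Sum>i\<in>UNIV. if i = j then P i x else 0)"
            by (rule sum.cong) (auto simp: axis_def)
          then show "P j x = (\<Sum>i\<in>UNIV. axis j 1 $ i * P i x)" by simp
        qed
    qed
    show "fv.subspace {(\<lambda>x. \<Sum>i\<in>UNIV. a $ i * P i x) | a. True}"
      unfolding fv.subspace_def
    proof safe
      show "\<exists>a. 0 = (\<lambda>x. \<Sum>i\<in>UNIV. a $ i * P i x) \<and> True"
        by (rule exI[of _ 0]) (auto simp: fun_eq_iff)
      fix a b :: "real^'m"
      show "\<exists>c. (\<lambda>x. \<Sum>i\<in>UNIV. a $ i * P i x) + (\<lambda>x. \<Sum>i\<in>UNIV. b $ i * P i x) = (\<lambda>x. \<Sum>i\<in>UNIV. c $ i * P i x) \<and> True"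
        by (rule exI[of _ "a + b"]) (auto simp: fun_eq_iff algebra_simps sum.distrib)
      fix c :: real
      show "\<exists>d. (\<lambda>x. c * (\<Sum>i\<in>UNIV. a $ i * P i x)) = (\<lambda>x. \<Sum>i\<in>UNIV. d $ i * P i x) \<and> True"
        by (rule exI[of _ "c *\<^sub>R a"]) (auto simp: fun_eq_iff algebra_simps sum_distrib_left)
    qed
  qed
  show "{(\<lambda>x. \<Sum>i\<in>UNIV. a $ i * P i x) | a. True} \<subseteq> fv.span (range P)"
  proof safe
    fix a :: "real^'m"
    have "(\<Sum>i\<in>UNIV. fsc (a $ i) (P i)) \<in> fv.span (range P)"
      by (intro fv.span_sum fv.span_scale fv.span_base) auto
    moreover have "(\<Sum>i\<in>UNIV. fsc (a $ i) (P i)) = (\<lambda>x. \<Sum>i\<in>UNIV. a $ i * P i x)"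
      by (auto simp: fun_eq_iff sum_fun_apply)
    ultimately show "(\<lambda>x. \<Sum>i\<in>UNIV. a $ i * P i x) \<in> fv.span (range P)" by simp
  qed
qed

lemma inj_pts_dim:
  fixes T :: "('a \<Rightarrow> real) set"
  assumes "finite T" "inj_pts (fv.span T) xs"
  shows "fv.dim T \<le> length xs"
proof -
  obtain B where B: "B \<subseteq> fv.span T" "fv.independent B" "fv.span T \<subseteq> fv.span B"
      "card B = fv.dim (fv.span T)"
    using fv.basis_exists by blast
  define E where "E v = (\<lambda>x. if x \<in> set xs then v x else 0)" for v :: "'a \<Rightarrow> real"
  define ind where "ind p = (\<lambda>x. if x = p then 1 else (0::real))" for p :: 'a
  have hom: "module_hom fsc fsc E"
    by unfold_locales (auto simp: E_def fun_eq_iff)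
  have spB: "fv.span B \<subseteq> fv.span T"
    by (rule fv.span_minimal[OF B(1) fv.subspace_span])
  have inj: "inj_on E (fv.span B)"
  proof (rule inj_onI)
    fix u w assume uw: "u \<in> fv.span B" "w \<in> fv.span B" "E u = E w"
    have "u - w \<in> fv.span T" using uw spB by (intro fv.span_diff) auto
    moreover have "\<forall>x\<in>set xs. (u - w) x = 0"
      using uw(3) by (auto simp: E_def fun_eq_iff split: if_splits)
    ultimately have "u - w = 0" using assms(2) unfolding inj_pts_def by blast
    then show "u = w" by simp
  qed
  have indep: "fv.independent (E ` B)"
    using module_hom.independent_injective_image[OF hom B(2) inj] .
  have sub: "E ` B \<subseteq> fv.span (ind ` set xs)"
  proof safe
    fix v assume "v \<in> B"
    have "(\<Sum>p\<in>set xs. fsc (v p) (ind p)) \<in> fv.span (ind ` set xs)"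
      by (intro fv.span_sum fv.span_scale fv.span_base) auto
    moreover have "(\<Sum>p\<in>set xs. fsc (v p) (ind p)) = E v"
    proof
      fix x
      have "(\<Sum>p\<in>set xs. fsc (v p) (ind p)) x = (\<Sum>p\<in>set xs. if p = x then v x else 0)"
        unfolding sum_fun_apply by (rule sum.cong) (auto simp: ind_def)
      also have "\<dots> = E v x" by (simp add: E_def)
      finally show "(\<Sum>p\<in>set xs. fsc (v p) (ind p)) x = E v x" .
    qed
    ultimately show "E v \<in> fv.span (ind ` set xs)" by simp
  qed
  have "card (E ` B) \<le> card (ind ` set xs)"
    using fv.independent_span_bound[OF _ indep sub] by simp
  also have "\<dots> \<le> card (set xs)" by (rule card_image_le) simp
  also have "\<dots> \<le> length xs" by (rule card_length)
  finally have "card (E ` B) \<le> length xs" .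
  moreover have "card (E ` B) = card B"
    by (rule card_image) (rule inj_on_subset[OF inj fv.span_superset])
  ultimately show ?thesis using B(4) by simp
qed

lemma exists_pts:
  fixes B :: "('a \<Rightarrow> real) set"
  shows "finite B \<Longrightarrow> \<exists>xs. length xs \<le> card B \<and> inj_pts (fv.span B) xs"
proof (induction "card B" arbitrary: B rule: less_induct)
  case less
  show ?case
  proof (cases "\<forall>v\<in>fv.span B. v = 0")
    case True
    then show ?thesis by (intro exI[of _ "[]"]) (auto simp: inj_pts_def)
  next
    case False
    then obtain v where v: "v \<in> fv.span B" "v \<noteq> 0" by blast
    then obtain x where x: "v x \<noteq> 0" by (auto simp: fun_eq_iff)
    define S' where "S' = {u \<in> fv.span B. u x = 0}"
    have subS': "fv.subspace S'"
      unfolding fv.subspace_def S'_def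
    proof (intro conjI ballI allI)
      show "0 \<in> {u \<in> fv.span B. u x = 0}" using fv.span_zero by simp
    next
      fix a b assume "a \<in> {u \<in> fv.span B. u x = 0}" "b \<in> {u \<in> fv.span B. u x = 0}"
      then show "a + b \<in> {u \<in> fv.span B. u x = 0}" using fv.span_add[of a B b] by simp
    next
      fix c a assume "a \<in> {u \<in> fv.span B. u x = 0}"
      then show "fsc c a \<in> {u \<in> fv.span B. u x = 0}" using fv.span_scale[of a B c] by simp
    qed
    obtain B' where B': "B' \<subseteq> S'" "fv.independent B'" "S' \<subseteq> fv.span B'"
      using fv.maximal_independent_subset[of S'] by blast
    have B'sp: "B' \<subseteq> fv.span B" using B'(1) unfolding S'_def by blast
    have spB': "fv.span B' \<subseteq> S'" using B'(1) subS' fv.span_minimal by blast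
    have vnot: "v \<notin> fv.span B'" using spB' x unfolding S'_def by blast
    have "fv.independent (insert v B')" by (rule fv.independent_insertI[OF vnot B'(2)])
    moreover have "insert v B' \<subseteq> fv.span B" using B'sp v by auto
    ultimately have bnd: "finite (insert v B') \<and> card (insert v B') \<le> card B"
      by (rule fv.independent_span_bound[OF less.prems])
    have finB': "finite B'" using bnd by auto
    have "v \<notin> B'" using vnot fv.span_base by metis
    then have ltc: "card B' < card B" using bnd finB' by simp
    obtain ys where ys: "length ys \<le> card B'" "inj_pts (fv.span B') ys"
      using less.hyps[OF ltc finB'] by blast
    show ?thesis
    proof (intro exI[of _ "x # ys"] conjI)
      show "length (x # ys) \<le> card B" using ys(1) ltc by simp
      show "inj_pts (fv.span B) (x # ys)"
        unfolding inj_pts_def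
      proof (intro ballI impI)
        fix u assume u: "u \<in> fv.span B" "\<forall>y\<in>set (x # ys). u y = 0"
        then have "u \<in> fv.span B'" using B'(3) S'_def by auto
        then show "u = 0" using ys(2) u(2) unfolding inj_pts_def by auto
      qed
    qed
  qed
qed

lemma emp_loss_nonneg:
  assumes "is_loss l" shows "0 \<le> emp_loss l fstar xs g"
  using assms unfolding emp_loss_def is_loss_def
  by (auto intro!: divide_nonneg_nonneg sum_list_nonneg)

lemma emp_loss_zero:
  assumes "is_loss l" shows "emp_loss l fstar xs g = 0 \<longleftrightarrow> (\<forall>x\<in>set xs. g x = fstar x)"
proof (cases "xs = []")
  case True then show ?thesis by (simp add: emp_loss_def)
next
  case False
  have nn: "\<And>u v. 0 \<le> l u v" and z: "\<And>u v. l u v = 0 \<longleftrightarrow> u = v"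
    using assms unfolding is_loss_def by auto
  have "emp_loss l fstar xs g = 0 \<longleftrightarrow> (\<Sum>x\<leftarrow>xs. l (g x) (fstar x)) = 0"
    using False by (simp add: emp_loss_def)
  also have "\<dots> \<longleftrightarrow> (\<forall>y\<in>set (map (\<lambda>x. l (g x) (fstar x)) xs). y = 0)"
    by (rule sum_list_nonneg_eq_0_iff) (auto simp: nn)
  also have "\<dots> \<longleftrightarrow> (\<forall>x\<in>set xs. g x = fstar x)" by (auto simp: z)
  finally show ?thesis .
qed

lemma tangent_eq:
  assumes "\<theta>' \<in> target_set f fstar"
  shows "tangent_hyperplane f \<theta>' =
     {(\<lambda>x. fstar x + v x) | v. v \<in> fv.span (range (param_partial f \<theta>'))}"
proof -
  have fs: "\<And>x. f x \<theta>' = fstar x" using assms unfolding target_set_def by auto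
  show ?thesis unfolding tangent_hyperplane_def span_range_eq fs by auto
qed

lemma LLR_iff:
  assumes l: "is_loss l" and th: "\<theta>' \<in> target_set f fstar"
  shows "LLR_guarantee f l fstar \<theta>' xs \<longleftrightarrow> inj_pts (fv.span (range (param_partial f \<theta>'))) xs"
proof -
  define V where "V = fv.span (range (param_partial f \<theta>'))"
  define T where "T = tangent_hyperplane f \<theta>'"
  have T: "T = {(\<lambda>x. fstar x + v x) | v. v \<in> V}"
    unfolding T_def V_def by (rule tangent_eq[OF th])
  have fT: "fstar \<in> T" unfolding T
    by (rule CollectI, rule exI[of _ 0]) (simp add: V_def fv.span_zero)
  have M: "{g \<in> T. \<forall>h \<in> T. emp_loss l fstar xs g \<le> emp_loss l fstar xs h}
        = {g \<in> T. \<forall>x\<in>set xs. g x = fstar x}"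
  proof -
    have "\<And>g. g \<in> T \<Longrightarrow> (\<forall>h \<in> T. emp_loss l fstar xs g \<le> emp_loss l fstar xs h)
            \<longleftrightarrow> emp_loss l fstar xs g = 0"
    proof
      fix g assume "\<forall>h \<in> T. emp_loss l fstar xs g \<le> emp_loss l fstar xs h"
      then have "emp_loss l fstar xs g \<le> emp_loss l fstar xs fstar" using fT by blast
      moreover have "emp_loss l fstar xs fstar = 0" using emp_loss_zero[OF l, of fstar xs fstar] by simp
      ultimately show "emp_loss l fstar xs g = 0" using emp_loss_nonneg[OF l, of fstar xs g] by linarith
    next
      fix g assume "emp_loss l fstar xs g = 0"
      then show "\<forall>h \<in> T. emp_loss l fstar xs g \<le> emp_loss l fstar xs h"
        using emp_loss_nonneg[OF l, of fstar xs] by simp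
    qed
    then show ?thesis using emp_loss_zero[OF l] by blast
  qed
  have "LLR_guarantee f l fstar \<theta>' xs \<longleftrightarrow> {g \<in> T. \<forall>x\<in>set xs. g x = fstar x} = {fstar}"
    unfolding LLR_guarantee_def M[unfolded T_def] T_def ..
  also have "\<dots> \<longleftrightarrow> inj_pts V xs"
  proof
    assume A: "{g \<in> T. \<forall>x\<in>set xs. g x = fstar x} = {fstar}"
    show "inj_pts V xs" unfolding inj_pts_def
    proof (intro ballI impI)
      fix v assume v: "v \<in> V" "\<forall>x\<in>set xs. v x = 0"
      have "(\<lambda>x. fstar x + v x) \<in> {g \<in> T. \<forall>x\<in>set xs. g x = fstar x}"
        using v unfolding T by auto
      then have "(\<lambda>x. fstar x + v x) = fstar" using A by blast
      then show "v = 0" by (auto simp: fun_eq_iff dest: fun_cong)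
    qed
  next
    assume A: "inj_pts V xs"
    show "{g \<in> T. \<forall>x\<in>set xs. g x = fstar x} = {fstar}"
    proof (intro equalityI subsetI)
      fix g assume g: "g \<in> {g \<in> T. \<forall>x\<in>set xs. g x = fstar x}"
      then obtain v where v: "v \<in> V" "g = (\<lambda>x. fstar x + v x)" unfolding T by blast
      then have "\<forall>x\<in>set xs. v x = 0" using g by auto
      then have "v = 0" using A v(1) unfolding inj_pts_def by blast
      then show "g \<in> {fstar}" using v(2) by auto
    next
      fix g assume "g \<in> {fstar}"
      then show "g \<in> {g \<in> T. \<forall>x\<in>set xs. g x = fstar x}" using fT by auto
    qed
  qed
  finally show ?thesis unfolding V_def .
qed

theorem mainTheorem4:
  fixes f :: "('d::finite, 'm::finite) model"
    and l :: "real \<Rightarrow> real \<Rightarrow> real"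
    and fstar :: "real^'d \<Rightarrow> real"
  assumes "is_model f"
    and "is_loss l"
    and "fstar \<in> fun_space f"
  shows "(\<exists>n. n_sample_LLR f l fstar n) \<and>
         optimistic_sample_size f l fstar = model_rank f fstar"
proof -
  note l = assms(2)
  obtain \<theta>0 where "fstar = (\<lambda>x. f x \<theta>0)" using assms(3) unfolding fun_space_def by blast
  then have t0: "\<theta>0 \<in> target_set f fstar" unfolding target_set_def by simp
  define r0 where "r0 = model_rank f fstar"
  have "\<exists>\<theta>'\<in>target_set f fstar. model_rank_at f \<theta>' = r0"
    unfolding r0_def model_rank_def by (rule LeastI_ex) (use t0 in blast)
  then obtain \<theta>1 where t1: "\<theta>1 \<in> target_set f fstar" and r1: "model_rank_at f \<theta>1 = r0" by blast
  have rmin: "\<And>\<theta>'. \<theta>' \<in> target_set f fstar \<Longrightarrow> r0 \<le> model_rank_at f \<theta>'"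
    unfolding r0_def model_rank_def by (rule Least_le) blast
  have rk: "\<And>\<theta>. model_rank_at f \<theta> = fv.dim (range (param_partial f \<theta>))"
    unfolding model_rank_at_def ..
  define P1 where "P1 = range (param_partial f \<theta>1)"
  have finP1: "finite P1" unfolding P1_def by simp
  obtain B where B: "B \<subseteq> fv.span P1" "fv.independent B" "fv.span P1 \<subseteq> fv.span B"
      "card B = fv.dim (fv.span P1)"
    using fv.basis_exists by blast
  have finB: "finite B" using fv.independent_span_bound[OF finP1 B(2) B(1)] by blast
  have spEq: "fv.span B = fv.span P1"
    using fv.span_minimal[OF B(1) fv.subspace_span] B(3) by blast
  obtain xs where xs: "length xs \<le> card B" "inj_pts (fv.span B) xs"
    using exists_pts[OF finB] by blast
  have inj1: "inj_pts (fv.span P1) xs" using xs(2) spEq by simp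
  have "fv.dim P1 \<le> length xs" by (rule inj_pts_dim[OF finP1 inj1])
  moreover have "card B = fv.dim P1" using B(4) by simp
  ultimately have len: "length xs = r0" using xs(1) r1 rk[of \<theta>1] P1_def by simp
  have nr0: "n_sample_LLR f l fstar r0"
    unfolding n_sample_LLR_def
    using len t1 LLR_iff[OF l t1, of xs] inj1 P1_def by blast
  have "optimistic_sample_size f l fstar = r0"
    unfolding optimistic_sample_size_def
  proof (rule Least_equality)
    show "n_sample_LLR f l fstar r0" by (rule nr0)
  next
    fix n assume "n_sample_LLR f l fstar n"
    then obtain ys \<theta>' where ys: "length ys = n" "\<theta>' \<in> target_set f fstar"
        "LLR_guarantee f l fstar \<theta>' ys"
      unfolding n_sample_LLR_def by blast
    have "inj_pts (fv.span (range (param_partial f \<theta>'))) ys"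
      using LLR_iff[OF l ys(2)] ys(3) by blast
    then have "fv.dim (range (param_partial f \<theta>')) \<le> n"
      using inj_pts_dim[of "range (param_partial f \<theta>')" ys] ys(1) by simp
    then show "r0 \<le> n" using rmin[OF ys(2)] rk[of \<theta>'] by simp
  qed
  then show ?thesis using nr0 r0_def by blast
qed

end
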